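(* Let $\mathcal{C}$ be the Cesàro operator $\mathcal{C}(x)=\big(\frac1n\sum_{i=1}^n x_i\big)_n$. Fix $1\le p<\infty$ and $1<q,r<\infty$, and let $T\colon\ell^p\to\ell^q$ be a nontrivial continuous linear operator with matrix $a_{ij}=T(e^j)_i$. Let $h=(h_j)\in\ell^{s_{pr}}$, and write $s=s_{rq}$ and $s'$ for its conjugate exponent. The following are equivalent: (a) There exists $g\in\ell^{s}$ such that $T(x)=g\,\mathcal{C}(hx)$ for all $x\in\ell^p$ (here $\mathcal{C}\colon\ell^r\to\ell^r$). (b) There exists $g=(g_i)\in\ell^{s}$ such that $a_{ij}=g_ih_j/i$ if $j\le i$ and $a_{ij}=0$ if $j>i$. (c) There exists $C>0$ such that $$\sum_{i=1}^n\sum_{j=1}^m r_{ij}a_{ij}\le C\Big(\sum_{i=1}^n\frac{1}{i^{s'}}\Big|\sum_{j=1}^{\min\{i,m\}}h_jr_{ij}\Big|^{s'}\Big)^{1/s'}$$ for all $n,m\in\mathbb{N}$ and all real $(r_{ij})$ with $|r_{ij}|\le1$. Moreover, if $r\le q$, then (a)–(c) are equivalent to: (d) There exists $C>0$ such that $\sum_{j=1}^m r_ja_{nj}\le C\frac1n\big|\sum_{j=1}^{\min\{n,m\}}h_jr_j\big|$ for all $n,m\in\mathbb{N}$ and all real $(r_j)$ with $|r_j|\le1$.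
   Context: $(e^n)$ denotes the standard unit vectors. For exponents $1\le a,b\le\infty$, $s_{ab}=\frac{ab}{a-b}$ if $1\le b<a<\infty$; $s_{ab}=b$ if $1\le b<a=\infty$; $s_{ab}=\infty$ if $1\le a\le b\le\infty$. Products of sequences are coordinatewise. $\mathcal{C}$ is bounded on $\ell^r$ for $1<r<\infty$. *)

theory Defs
  imports Complex_Main "HOL-Library.Extended_Real"
begin

text \<open>Real sequences are functions nat \<Rightarrow> real, indexed from 0:
  index k corresponds to the paper's coordinate k+1.\<close>

definition in_lp :: "ereal \<Rightarrow> (nat \<Rightarrow> real) \<Rightarrow> bool" where
  "in_lp p x = (if p = \<infinity> then bdd_above (range (\<lambda>n. \<bar>x n\<bar>))
               else summable (\<lambda>n. \<bar>x n\<bar> powr real_of_ereal p))"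

definition lp_norm :: "real \<Rightarrow> (nat \<Rightarrow> real) \<Rightarrow> real" where
  "lp_norm p x = (\<Sum>n. \<bar>x n\<bar> powr p) powr (1 / p)"

definition s_exp :: "real \<Rightarrow> real \<Rightarrow> ereal" where
  "s_exp a b = (if b < a then ereal (a * b / (a - b)) else \<infinity>)"

definition conj_exp :: "ereal \<Rightarrow> real" where
  "conj_exp s = (if s = \<infinity> then 1 else real_of_ereal s / (real_of_ereal s - 1))"

definition unit_vec :: "nat \<Rightarrow> nat \<Rightarrow> real" where
  "unit_vec j = (\<lambda>k. if k = j then 1 else 0)"

text \<open>Cesaro operator: C(x)_n = (1/n) \<Sum>_{i=1}^n x_i, shifted to 0-based indexing.\<close>
definition cesaro :: "(nat \<Rightarrow> real) \<Rightarrow> nat \<Rightarrow> real" where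
  "cesaro x = (\<lambda>n. (\<Sum>i\<le>n. x i) / real (n + 1))"

definition bounded_lin_op :: "real \<Rightarrow> real \<Rightarrow> ((nat \<Rightarrow> real) \<Rightarrow> (nat \<Rightarrow> real)) \<Rightarrow> bool" where
  "bounded_lin_op p q T \<longleftrightarrow>
     (\<forall>x. in_lp (ereal p) x \<longrightarrow> in_lp (ereal q) (T x)) \<and>
     (\<forall>x y. in_lp (ereal p) x \<longrightarrow> in_lp (ereal p) y \<longrightarrow> T (\<lambda>k. x k + y k) = (\<lambda>k. T x k + T y k)) \<and>
     (\<forall>c x. in_lp (ereal p) x \<longrightarrow> T (\<lambda>k. c * x k) = (\<lambda>k. c * T x k)) \<and>
     (\<exists>K. \<forall>x. in_lp (ereal p) x \<longrightarrow> lp_norm q (T x) \<le> K * lp_norm p x)"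

end

theory Submission
  imports Defs "HOL-Analysis.Convex"
begin

definition mat_form :: "(nat \<Rightarrow> nat \<Rightarrow> real) \<Rightarrow> (nat \<Rightarrow> real) \<Rightarrow> (nat \<Rightarrow> real) \<Rightarrow> bool" where
  "mat_form a h g \<longleftrightarrow> (\<forall>i j. a i j = (if j \<le> i then g i * h j / real (i + 1) else 0))"

lemma in_lp_fin: "in_lp (ereal p) x \<longleftrightarrow> summable (\<lambda>n. \<bar>x n\<bar> powr p)"
  by (simp add: in_lp_def)

lemma in_lp_finsupp:
  assumes "p > 0" "finite N" "\<And>n. n \<notin> N \<Longrightarrow> x n = 0"
  shows "in_lp (ereal p) x"
  unfolding in_lp_fin using assms by (intro summable_finite[of N]) auto

lemma unit_vec_lp: "p > 0 \<Longrightarrow> in_lp (ereal p) (unit_vec j)"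
  by (rule in_lp_finsupp[of p "{j}"]) (auto simp: unit_vec_def)

lemma cesaro_unit: "cesaro (\<lambda>k. h k * unit_vec j k) i = (if j \<le> i then h j / real (i+1) else 0)"
  unfolding cesaro_def unit_vec_def by (simp add: if_distrib cong: if_cong)

lemma mat_from_T:
  assumes Tg: "\<forall>x. in_lp (ereal p) x \<longrightarrow> T x = (\<lambda>n. g n * cesaro (\<lambda>k. h k * x k) n)"
    and p: "1 \<le> p" and a_def: "\<And>i j. a i j = T (unit_vec j) i"
  shows "mat_form a h g"
  unfolding mat_form_def
proof (intro allI)
  fix i j
  have "T (unit_vec j) = (\<lambda>n. g n * cesaro (\<lambda>k. h k * unit_vec j k) n)"
    using Tg unit_vec_lp[of p j] p by auto
  then show "a i j = (if j \<le> i then g i * h j / real (i + 1) else 0)"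
    by (simp add: a_def cesaro_unit)
qed

lemma coord_le_norm:
  assumes "in_lp (ereal q) y" "q > 0"
  shows "\<bar>y i\<bar> \<le> lp_norm q y"
proof -
  have sm: "summable (\<lambda>n. \<bar>y n\<bar> powr q)" using assms(1) by (simp add: in_lp_fin)
  have "\<bar>y i\<bar> powr q \<le> (\<Sum>n. \<bar>y n\<bar> powr q)"
    using sum_le_suminf[OF sm, of "{i}"] by simp
  then have "(\<bar>y i\<bar> powr q) powr (1/q) \<le> (\<Sum>n. \<bar>y n\<bar> powr q) powr (1/q)"
    by (rule powr_mono2[rotated 2]) (use assms in auto)
  moreover have "(\<bar>y i\<bar> powr q) powr (1/q) = \<bar>y i\<bar>"
    using assms by (simp add: powr_powr)
  ultimately show ?thesis by (simp add: lp_norm_def)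
qed

lemma tail_norm_tendsto:
  assumes "in_lp (ereal p) x" "p > 0"
  shows "(\<lambda>N. lp_norm p (\<lambda>k. if k < N then 0 else x k)) \<longlonglongrightarrow> 0"
proof -
  define F where "F = (\<lambda>n. \<bar>x n\<bar> powr p)"
  have sm: "summable F" using assms(1) by (simp add: in_lp_fin F_def)
  have eq: "(\<Sum>k. \<bar>if k < N then 0 else x k\<bar> powr p) = suminf F - (\<Sum>i<N. F i)" for N
  proof -
    have sm2: "summable (\<lambda>k. \<bar>if k < N then 0 else x k\<bar> powr p)"
      by (rule summable_comparison_test'[OF sm, of N]) (auto simp: F_def)
    have "(\<Sum>k. \<bar>if k < N then 0 else x k\<bar> powr p) = (\<Sum>n. F (n + N))"
      using suminf_split_initial_segment[OF sm2, of N] by (simp add: F_def)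
    also have "\<dots> = suminf F - (\<Sum>i<N. F i)"
      using suminf_split_initial_segment[OF sm, of N] by simp
    finally show ?thesis .
  qed
  have "(\<lambda>N. suminf F - (\<Sum>i<N. F i)) \<longlonglongrightarrow> suminf F - suminf F"
    by (intro tendsto_diff tendsto_const summable_LIMSEQ sm)
  then have t0: "(\<lambda>N. (\<Sum>k. \<bar>if k < N then 0 else x k\<bar> powr p)) \<longlonglongrightarrow> 0"
    by (simp add: eq)
  have nn: "0 \<le> (\<Sum>k. \<bar>if k < N then 0 else x k\<bar> powr p)" for N
    by (rule suminf_nonneg) (rule summable_comparison_test'[OF sm, of N], auto simp: F_def)
  show ?thesis
    unfolding lp_norm_def
    by (rule tendsto_zero_powrI[OF t0 tendsto_const]) (use nn assms in auto)
qed

lemma T_from_mat: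
  assumes blo: "bounded_lin_op p q T" and p: "1 \<le> p" and q: "1 < q"
    and a_def: "\<And>i j. a i j = T (unit_vec j) i" and mf: "mat_form a h g"
  shows "\<forall>x. in_lp (ereal p) x \<longrightarrow> T x = (\<lambda>n. g n * cesaro (\<lambda>k. h k * x k) n)"
proof (intro allI impI)
  fix x assume x: "in_lp (ereal p) x"
  have Tq: "\<And>x. in_lp (ereal p) x \<Longrightarrow> in_lp (ereal q) (T x)"
    and Tadd: "\<And>x y. in_lp (ereal p) x \<Longrightarrow> in_lp (ereal p) y \<Longrightarrow> T (\<lambda>k. x k + y k) = (\<lambda>k. T x k + T y k)"
    and Tsc: "\<And>c x. in_lp (ereal p) x \<Longrightarrow> T (\<lambda>k. c * x k) = (\<lambda>k. c * T x k)"
    using blo unfolding bounded_lin_op_def by auto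
  obtain K where K: "\<And>x. in_lp (ereal p) x \<Longrightarrow> lp_norm q (T x) \<le> K * lp_norm p x"
    using blo unfolding bounded_lin_op_def by auto
  have p0: "p > 0" using p by simp
  define xN where "xN N = (\<lambda>k. if k < N then x k else 0)" for N
  define yN where "yN N = (\<lambda>k. if k < N then 0 else x k)" for N
  have xNl: "in_lp (ereal p) (xN N)" for N
    by (rule in_lp_finsupp[OF p0, of "{..<N}"]) (auto simp: xN_def)
  have yNl: "in_lp (ereal p) (yN N)" for N
    using x unfolding in_lp_fin yN_def
    by (rule summable_comparison_test'[of _ N]) auto
  have z: "in_lp (ereal p) (\<lambda>_. 0)"
    by (rule in_lp_finsupp[OF p0, of "{}"]) auto
  have T0: "T (\<lambda>_. 0) = (\<lambda>_. 0)"
    using Tsc[OF z, of 0] by simp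
  have TxN: "T (xN N) = (\<lambda>i. \<Sum>j<N. x j * a i j)" for N
  proof (induction N)
    case 0
    then show ?case using T0 by (simp add: xN_def)
  next
    case (Suc N)
    have u: "in_lp (ereal p) (\<lambda>k. x N * unit_vec N k)"
      by (rule in_lp_finsupp[OF p0, of "{N}"]) (auto simp: unit_vec_def)
    have "xN (Suc N) = (\<lambda>k. xN N k + x N * unit_vec N k)"
      by (rule ext) (auto simp: xN_def unit_vec_def less_Suc_eq)
    then have "T (xN (Suc N)) = (\<lambda>k. T (xN N) k + T (\<lambda>k. x N * unit_vec N k) k)"
      using Tadd[OF xNl u] by simp
    also have "\<dots> = (\<lambda>i. (\<Sum>j<N. x j * a i j) + x N * a i N)"
      using Tsc[OF unit_vec_lp[OF p0, of N], of "x N"] Suc by (simp add: a_def)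
    finally show ?case by simp
  qed
  have split: "T x = (\<lambda>k. T (xN N) k + T (yN N) k)" for N
  proof -
    have "x = (\<lambda>k. xN N k + yN N k)" by (auto simp: xN_def yN_def)
    then show ?thesis using Tadd[OF xNl yNl, of N N] by metis
  qed
  show "T x = (\<lambda>n. g n * cesaro (\<lambda>k. h k * x k) n)"
  proof
    fix i
    define d where "d = T x i - g i * cesaro (\<lambda>k. h k * x k) i"
    have dN: "d = T (yN N) i" if "N \<ge> i + 1" for N
    proof -
      have "(\<Sum>j<N. x j * a i j) = (\<Sum>j\<le>i. x j * a i j)"
        by (rule sum.mono_neutral_right) (use that mf in \<open>auto simp: mat_form_def\<close>)
      also have "\<dots> = (\<Sum>j\<le>i. g i * (h j * x j) / real (i + 1))"
        using mf by (intro sum.cong) (auto simp: mat_form_def)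
      also have "\<dots> = g i * cesaro (\<lambda>k. h k * x k) i"
        by (simp add: cesaro_def sum_divide_distrib sum_distrib_left)
      finally show ?thesis using split[of N] TxN[of N] unfolding d_def by (metis add_diff_cancel_left')
    qed
    have le: "\<bar>d\<bar> \<le> K * lp_norm p (yN N)" if "N \<ge> i + 1" for N
      using dN[OF that] coord_le_norm[OF Tq[OF yNl[of N]], of i] q K[OF yNl[of N]] by simp
    have "(\<lambda>N. K * lp_norm p (yN N)) \<longlonglongrightarrow> K * 0"
      by (intro tendsto_mult tendsto_const) (unfold yN_def, rule tail_norm_tendsto[OF x p0])
    then have "\<bar>d\<bar> \<le> K * 0"
      by (rule LIMSEQ_le_const) (use le in auto)
    then show "T x i = g i * cesaro (\<lambda>k. h k * x k) i" by (simp add: d_def)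
  qed
qed

lemma holder_fin:
  fixes x y :: "'a \<Rightarrow> real"
  assumes A: "finite A" and s: "s > 1" and t: "t > 1" and st: "1/s + 1/t = 1"
  shows "(\<Sum>i\<in>A. x i * y i) \<le> (\<Sum>i\<in>A. \<bar>x i\<bar> powr s) powr (1/s) * (\<Sum>i\<in>A. \<bar>y i\<bar> powr t) powr (1/t)"
proof -
  define SX where "SX = (\<Sum>i\<in>A. \<bar>x i\<bar> powr s)"
  define SY where "SY = (\<Sum>i\<in>A. \<bar>y i\<bar> powr t)"
  have SX0: "SX \<ge> 0" "SY \<ge> 0" by (simp_all add: SX_def SY_def sum_nonneg)
  show ?thesis
  proof (cases "SX = 0 \<or> SY = 0")
    case True
    then have "\<forall>i\<in>A. x i * y i = 0"
      using A by (auto simp: SX_def SY_def sum_nonneg_eq_0_iff)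
    then have "(\<Sum>i\<in>A. x i * y i) = 0" by (simp add: sum.neutral)
    then show ?thesis by simp
  next
    case False
    then have SXp: "SX > 0" "SY > 0" using SX0 by auto
    define X where "X = SX powr (1/s)"
    define Y where "Y = SY powr (1/t)"
    have X0: "X > 0" "Y > 0" using SXp by (simp_all add: X_def Y_def)
    have XS: "X powr s = SX" "Y powr t = SY"
      using SXp s t by (simp_all add: X_def Y_def powr_powr)
    have "(\<Sum>i\<in>A. x i * y i) \<le> (\<Sum>i\<in>A. X * Y * ((\<bar>x i\<bar>/X) * (\<bar>y i\<bar>/Y)))"
    proof (rule sum_mono)
      fix i assume "i \<in> A"
      have "X * Y * ((\<bar>x i\<bar>/X) * (\<bar>y i\<bar>/Y)) = \<bar>x i * y i\<bar>"
        using X0 by (simp add: abs_mult)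
      then show "x i * y i \<le> X * Y * ((\<bar>x i\<bar>/X) * (\<bar>y i\<bar>/Y))" by simp
    qed
    also have "\<dots> \<le> (\<Sum>i\<in>A. X * Y * ((\<bar>x i\<bar>/X) powr s / s + (\<bar>y i\<bar>/Y) powr t / t))"
      by (rule sum_mono, rule mult_left_mono, rule Youngs_inequality) (use s t st X0 in auto)
    also have "\<dots> = X * Y * ((\<Sum>i\<in>A. (\<bar>x i\<bar>/X) powr s) / s + (\<Sum>i\<in>A. (\<bar>y i\<bar>/Y) powr t) / t)"
      by (simp add: sum_distrib_left[symmetric] sum.distrib sum_divide_distrib)
    also have "(\<Sum>i\<in>A. (\<bar>x i\<bar>/X) powr s) = 1"
      using SXp by (simp add: powr_divide sum_divide_distrib[symmetric] XS SX_def[symmetric])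
    also have "(\<Sum>i\<in>A. (\<bar>y i\<bar>/Y) powr t) = 1"
      using SXp by (simp add: powr_divide sum_divide_distrib[symmetric] XS SY_def[symmetric])
    finally show ?thesis using st by (simp add: X_def Y_def SX_def SY_def)
  qed
qed

lemma conv_holder:
  fixes G c :: "nat \<Rightarrow> real"
  assumes s: "s > 1" and t: "t = s/(s-1)" and C: "C > 0"
    and Gc: "\<forall>i. c i = 0 \<longrightarrow> G i = 0"
    and H: "\<forall>\<epsilon>. (\<forall>i. \<bar>\<epsilon> i\<bar> \<le> 1) \<longrightarrow>
        (\<Sum>i<n. \<epsilon> i * (G i * c i)) \<le> C * (\<Sum>i<n. \<bar>c i * \<epsilon> i\<bar> powr t) powr (1/t)"
  shows "(\<Sum>i<n. \<bar>G i\<bar> powr s) \<le> C powr s"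
proof -
  define u where "u i = sgn (G i) * \<bar>G i\<bar> powr (s-1)" for i
  define M where "M = 1 + (\<Sum>i<n. \<bar>u i\<bar> / \<bar>c i\<bar>)"
  have M1: "M \<ge> 1" unfolding M_def by (simp add: sum_nonneg)
  define \<epsilon> where "\<epsilon> i = (if c i = 0 \<or> i \<ge> n then 0 else u i / (c i * M))" for i
  have eb: "\<bar>\<epsilon> i\<bar> \<le> 1" for i
  proof (cases "c i = 0 \<or> i \<ge> n")
    case False
    then have "\<bar>u i\<bar> / \<bar>c i\<bar> \<le> (\<Sum>i<n. \<bar>u i\<bar> / \<bar>c i\<bar>)"
      by (intro member_le_sum) auto
    then have "\<bar>u i\<bar> / \<bar>c i\<bar> \<le> M" unfolding M_def by linarith
    then show ?thesis using False M1 by (simp add: \<epsilon>_def abs_mult divide_simps mult.commute)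
  qed (auto simp: \<epsilon>_def)
  define S where "S = (\<Sum>i<n. \<bar>G i\<bar> powr s)"
  have S0: "S \<ge> 0" by (simp add: S_def sum_nonneg)
  have Gpow: "\<bar>G i\<bar> powr (s-1) * \<bar>G i\<bar> = \<bar>G i\<bar> powr s" for i
  proof (cases "G i = 0")
    case False then show ?thesis
      using powr_mult_base[of "\<bar>G i\<bar>" "s-1"] by (simp add: mult.commute)
  qed simp
  have lhs: "(\<Sum>i<n. \<epsilon> i * (G i * c i)) = S / M"
    unfolding S_def sum_divide_distrib
  proof (rule sum.cong[OF refl])
    fix i assume i: "i \<in> {..<n}"
    show "\<epsilon> i * (G i * c i) = \<bar>G i\<bar> powr s / M"
    proof (cases "c i = 0")
      case True then show ?thesis using Gc by (simp add: \<epsilon>_def)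
    next
      case False
      have "\<epsilon> i * (G i * c i) = (sgn (G i) * G i) * \<bar>G i\<bar> powr (s-1) / M"
        using False i M1 by (simp add: \<epsilon>_def u_def)
      also have "sgn (G i) * G i = \<bar>G i\<bar>" by (simp add: sgn_mult_self_eq abs_sgn)
      finally show ?thesis using Gpow[of i] by (simp add: mult.commute)
    qed
  qed
  have tp: "t > 0" "(s-1) * t = s" using s by (simp_all add: t)
  have rhs: "(\<Sum>i<n. \<bar>c i * \<epsilon> i\<bar> powr t) = S / M powr t"
    unfolding S_def sum_divide_distrib
  proof (rule sum.cong[OF refl])
    fix i assume i: "i \<in> {..<n}"
    show "\<bar>c i * \<epsilon> i\<bar> powr t = \<bar>G i\<bar> powr s / M powr t"
    proof (cases "c i = 0")
      case True then show ?thesis using Gc tp by (simp add: \<epsilon>_def)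
    next
      case False
      have "\<bar>c i * \<epsilon> i\<bar> = \<bar>G i\<bar> powr (s-1) / M"
        using False i M1 by (simp add: \<epsilon>_def u_def abs_mult abs_sgn_eq)
      then have "\<bar>c i * \<epsilon> i\<bar> powr t = (\<bar>G i\<bar> powr (s-1)) powr t / M powr t"
        by (simp add: powr_divide)
      also have "\<dots> = \<bar>G i\<bar> powr s / M powr t" using tp by (simp add: powr_powr)
      finally show ?thesis .
    qed
  qed
  have "S / M \<le> C * (S / M powr t) powr (1/t)"
    using H eb lhs rhs by metis
  also have "(S / M powr t) powr (1/t) = S powr (1/t) / M"
    using M1 tp by (simp add: powr_divide powr_powr)
  finally have SC: "S \<le> C * S powr (1/t)"
    using M1 by (simp add: divide_simps)
  show ?thesis
  proof (cases "S = 0")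
    case True then show ?thesis using C by (simp add: S_def)
  next
    case False
    then have Sp: "S > 0" using S0 by simp
    have "S = S powr (1/s) * S powr (1/t)"
      using Sp s by (simp add: powr_add[symmetric] t divide_simps)
    with SC have "S powr (1/s) * S powr (1/t) \<le> C * S powr (1/t)" by simp
    then have "S powr (1/s) \<le> C"
      by (rule mult_right_le_imp_le) (use Sp in simp)
    then have "(S powr (1/s)) powr s \<le> C powr s"
      by (rule powr_mono2[rotated 2]) (use s in auto)
    then show ?thesis using Sp s by (simp add: powr_powr S_def)
  qed
qed

definition cond_c :: "(nat \<Rightarrow> nat \<Rightarrow> real) \<Rightarrow> (nat \<Rightarrow> real) \<Rightarrow> real \<Rightarrow> bool" where
  "cond_c a h s' \<longleftrightarrow> (\<exists>C>0. \<forall>n m (R :: nat \<Rightarrow> nat \<Rightarrow> real). (\<forall>i j. \<bar>R i j\<bar> \<le> 1) \<longrightarrow>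
             (\<Sum>i<n. \<Sum>j<m. R i j * a i j)
               \<le> C * (\<Sum>i<n. (1 / real (i + 1) powr s') *
                        \<bar>\<Sum>j<min (i + 1) m. h j * R i j\<bar> powr s') powr (1 / s'))"

definition cond_d :: "(nat \<Rightarrow> nat \<Rightarrow> real) \<Rightarrow> (nat \<Rightarrow> real) \<Rightarrow> bool" where
  "cond_d a h \<longleftrightarrow> (\<exists>C>0. \<forall>n m (\<rho> :: nat \<Rightarrow> real). (\<forall>j. \<bar>\<rho> j\<bar> \<le> 1) \<longrightarrow>
             (\<Sum>j<m. \<rho> j * a n j)
               \<le> C * (1 / real (n + 1)) * \<bar>\<Sum>j<min (n + 1) m. h j * \<rho> j\<bar>)"

lemma c_imp_d:
  assumes t: "t > 0" and c: "cond_c a h t"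
  shows "cond_d a h"
proof -
  obtain C where C: "C > 0" and H: "\<And>n m R. (\<forall>i j. \<bar>R i j\<bar> \<le> 1) \<Longrightarrow>
             (\<Sum>i<n. \<Sum>j<m. R i j * a i j)
               \<le> C * (\<Sum>i<n. (1 / real (i + 1) powr t) *
                        \<bar>\<Sum>j<min (i + 1) m. h j * R i j\<bar> powr t) powr (1 / t)"
    using c unfolding cond_c_def by blast
  show ?thesis unfolding cond_d_def
  proof (intro exI[of _ C] conjI allI impI)
    show "C > 0" by fact
    fix n m :: nat and \<rho> :: "nat \<Rightarrow> real" assume \<rho>: "\<forall>j. \<bar>\<rho> j\<bar> \<le> 1"
    define R where "R i j = (if i = n then \<rho> j else 0)" for i j
    have Rb: "\<forall>i j. \<bar>R i j\<bar> \<le> 1" using \<rho> by (simp add: R_def)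
    have z1: "(\<Sum>i<n. \<Sum>j<m. R i j * a i j) = 0"
      by (intro sum.neutral) (auto simp: R_def)
    have z2: "(\<Sum>i<n. (1 / real (i + 1) powr t) * \<bar>\<Sum>j<min (i + 1) m. h j * R i j\<bar> powr t) = 0"
      by (intro sum.neutral) (auto simp: R_def)
    define S where "S = \<bar>\<Sum>j<min (n + 1) m. h j * \<rho> j\<bar>"
    have "(1 / real (n + 1) powr t) * S powr t = (S / real (n + 1)) powr t"
      by (simp add: powr_divide)
    then have e: "((1 / real (n + 1) powr t) * S powr t) powr (1/t) = 1 / real (n + 1) * S"
      using t by (simp add: powr_powr S_def)
    have "(\<Sum>i<Suc n. \<Sum>j<m. R i j * a i j) \<le> C * (\<Sum>i<Suc n. (1 / real (i + 1) powr t) *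
                        \<bar>\<Sum>j<min (i + 1) m. h j * R i j\<bar> powr t) powr (1 / t)"
      by (rule H[OF Rb])
    then show "(\<Sum>j<m. \<rho> j * a n j) \<le> C * (1 / real (n + 1)) * \<bar>\<Sum>j<min (n + 1) m. h j * \<rho> j\<bar>"
      using z1 z2 e by (simp add: R_def S_def)
  qed
qed

lemma d_imp_c1:
  assumes "cond_d a h"
  shows "cond_c a h 1"
proof -
  obtain C where C: "C > 0" and H: "\<And>n m \<rho>. (\<forall>j. \<bar>\<rho> j\<bar> \<le> 1) \<Longrightarrow>
             (\<Sum>j<m. \<rho> j * a n j) \<le> C * (1 / real (n + 1)) * \<bar>\<Sum>j<min (n + 1) m. h j * \<rho> j\<bar>"
    using assms unfolding cond_d_def by blast
  show ?thesis unfolding cond_c_def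
  proof (intro exI[of _ C] conjI allI impI)
    show "C > 0" by fact
    fix n m :: nat and R :: "nat \<Rightarrow> nat \<Rightarrow> real" assume R: "\<forall>i j. \<bar>R i j\<bar> \<le> 1"
    have "(\<Sum>i<n. \<Sum>j<m. R i j * a i j) \<le> (\<Sum>i<n. C * (1 / real (i + 1)) * \<bar>\<Sum>j<min (i + 1) m. h j * R i j\<bar>)"
      by (rule sum_mono, rule H) (use R in auto)
    also have "\<dots> = C * (\<Sum>i<n. (1 / real (i + 1) powr 1) * \<bar>\<Sum>j<min (i + 1) m. h j * R i j\<bar> powr 1) powr (1 / 1)"
      by (simp add: sum_distrib_left sum_nonneg mult.assoc)
    finally show "(\<Sum>i<n. \<Sum>j<m. R i j * a i j) \<le> C * (\<Sum>i<n. (1 / real (i + 1) powr 1) * \<bar>\<Sum>j<min (i + 1) m. h j * R i j\<bar> powr 1) powr (1 / 1)" .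
  qed
qed

lemma d_unit:
  assumes H: "\<And>n m \<rho>. (\<forall>j. \<bar>\<rho> j\<bar> \<le> 1) \<Longrightarrow>
             (\<Sum>j<m. \<rho> j * a n j) \<le> C * (1 / real (n + 1)) * \<bar>\<Sum>j<min (n + 1) m. h j * \<rho> j\<bar>"
    and C: "C > 0"
  shows "\<bar>a i j\<bar> \<le> C * (1 / real (i + 1)) * (if j \<le> i then \<bar>h j\<bar> else 0)"
proof -
  define \<rho> where "\<rho> l = (if l = j then sgn (a i j) else 0)" for l
  have "\<forall>l. \<bar>\<rho> l\<bar> \<le> 1" by (simp add: \<rho>_def abs_sgn_eq)
  from H[OF this, where n=i and m="Suc j"]
  have "(\<Sum>l<Suc j. \<rho> l * a i l) \<le> C * (1 / real (i + 1)) * \<bar>\<Sum>l<min (i + 1) (Suc j). h l * \<rho> l\<bar>" .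
  moreover have A2: "(\<Sum>l<Suc j. \<rho> l * a i l) = \<bar>a i j\<bar>"
    by (simp add: \<rho>_def if_distrib sgn_mult_self_eq cong: if_cong) (simp add: sgn_mult_self_eq mult.commute abs_sgn)
  moreover have A3: "\<bar>\<Sum>l<min (i + 1) (Suc j). h l * \<rho> l\<bar> \<le> (if j \<le> i then \<bar>h j\<bar> else 0)"
    by (simp add: \<rho>_def if_distrib cong: if_cong) (auto simp: abs_mult abs_sgn_eq)
  moreover have c0: "0 \<le> C * (1 / real (i + 1))" using C by simp
  ultimately show ?thesis
    using mult_left_mono[OF A3 c0] by linarith
qed

lemma d_pair:
  assumes H: "\<And>n m \<rho>. (\<forall>j. \<bar>\<rho> j\<bar> \<le> 1) \<Longrightarrow>
             (\<Sum>j<m. \<rho> j * a n j) \<le> C * (1 / real (n + 1)) * \<bar>\<Sum>j<min (n + 1) m. h j * \<rho> j\<bar>"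
    and jk: "j \<le> i" "k \<le> i"
  shows "a i j * h k = a i k * h j"
proof (cases "j = k")
  case False
  define \<tau> where "\<tau> = 1 / (1 + \<bar>h j\<bar> + \<bar>h k\<bar>)"
  have \<tau>0: "\<tau> > 0" by (simp add: \<tau>_def add_pos_nonneg)
  define m where "m = Suc (max j k)"
  have key: "\<sigma> * \<tau> * (a i j * h k - a i k * h j) \<le> 0" if \<sigma>: "\<bar>\<sigma>\<bar> = 1" for \<sigma>
  proof -
    define \<rho> where "\<rho> l = \<sigma> * \<tau> * ((if l = j then h k else 0) - (if l = k then h j else 0))" for l
    have "\<bar>\<rho> l\<bar> \<le> 1" for l
    proof -
      have "\<bar>(if l = j then h k else 0) - (if l = k then h j else 0)\<bar> \<le> 1 + \<bar>h j\<bar> + \<bar>h k\<bar>"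
        by auto
      then have "\<tau> * \<bar>(if l = j then h k else 0) - (if l = k then h j else 0)\<bar> \<le> 1"
        unfolding \<tau>_def by (simp add: divide_simps add_pos_nonneg)
      then show ?thesis using \<sigma> \<tau>0 by (simp add: \<rho>_def abs_mult)
    qed
    from H[OF allI[OF this], where n=i and m=m]
    have *: "(\<Sum>l<m. \<rho> l * a i l) \<le> C * (1 / real (i + 1)) * \<bar>\<Sum>l<min (i + 1) m. h l * \<rho> l\<bar>" .
    have gen: "(\<Sum>l\<in>L. ((if l = j then A else 0) - (if l = k then B else 0)) * f l) = A * f j - B * f k"
      if "finite L" "j \<in> L" "k \<in> L" for L A B and f :: "nat \<Rightarrow> real"
    proof -
      have "(\<Sum>l\<in>L. ((if l = j then A else 0) - (if l = k then B else 0)) * f l)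
          = (\<Sum>l\<in>L. (if l = j then A * f l else 0) - (if l = k then B * f l else 0))"
        by (rule sum.cong) (auto simp: left_diff_distrib)
      also have "\<dots> = A * f j - B * f k"
        using that by (simp add: sum_subtractf sum.delta)
      finally show ?thesis .
    qed
    have "(\<Sum>l<m. \<rho> l * a i l) = \<sigma> * \<tau> * (\<Sum>l<m. ((if l = j then h k else 0) - (if l = k then h j else 0)) * a i l)"
      by (simp add: \<rho>_def sum_distrib_left mult.assoc)
    also have "\<dots> = \<sigma> * \<tau> * (a i j * h k - a i k * h j)"
      by (subst gen) (auto simp: m_def)
    finally have l: "(\<Sum>l<m. \<rho> l * a i l) = \<sigma> * \<tau> * (a i j * h k - a i k * h j)" .
    have "(\<Sum>l<min (i + 1) m. h l * \<rho> l) = \<sigma> * \<tau> * (\<Sum>l<min (i + 1) m. ((if l = j then h k else 0) - (if l = k then h j else 0)) * h l)"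
      by (simp add: \<rho>_def sum_distrib_left mult_ac)
    also have "\<dots> = 0"
      by (subst gen) (use jk in \<open>auto simp: m_def\<close>)
    finally show ?thesis using * l by simp
  qed
  have "1 * \<tau> * (a i j * h k - a i k * h j) \<le> 0" by (rule key) simp
  moreover have "(-1) * \<tau> * (a i j * h k - a i k * h j) \<le> 0" by (rule key) simp
  ultimately have "\<tau> * (a i j * h k - a i k * h j) = 0" by linarith
  then show ?thesis using \<tau>0 by simp
qed simp

lemma rowsum:
  assumes "mat_form a h g"
  shows "(\<Sum>j<m. R j * a i j) = g i * (1 / real (i + 1)) * (\<Sum>j<min (i + 1) m. h j * R j)"
proof -
  define F where "F j = g i * (1 / real (i + 1)) * (h j * R j)" for j
  have "(\<Sum>j<m. R j * a i j) = (\<Sum>j<m. if j \<in> {..i} then F j else 0)"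
  proof (rule sum.cong[OF refl])
    fix j
    show "R j * a i j = (if j \<in> {..i} then F j else 0)"
      using assms unfolding mat_form_def F_def by (auto simp: field_simps)
  qed
  also have "\<dots> = (\<Sum>j\<in>{..<m} \<inter> {..i}. F j)"
    by (simp add: sum.inter_restrict)
  also have "{..<m} \<inter> {..i} = {..<min (i + 1) m}" by auto
  finally show ?thesis by (simp add: sum_distrib_left F_def)
qed

lemma d_struct:
  assumes "cond_d a h"
  shows "\<exists>g. mat_form a h g \<and> (\<forall>i. (\<forall>j\<le>i. h j = 0) \<longrightarrow> g i = 0) \<and> (\<exists>C>0. \<forall>i. \<bar>g i\<bar> \<le> C)"
proof -
  obtain C where C: "C > 0" and H: "\<And>n m \<rho>. (\<forall>j. \<bar>\<rho> j\<bar> \<le> 1) \<Longrightarrow>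
             (\<Sum>j<m. \<rho> j * a n j) \<le> C * (1 / real (n + 1)) * \<bar>\<Sum>j<min (n + 1) m. h j * \<rho> j\<bar>"
    using assms unfolding cond_d_def by blast
  note U = d_unit[OF H C]
  define j0 where "j0 = (LEAST j. h j \<noteq> 0)"
  define g where "g i = (if \<exists>j\<le>i. h j \<noteq> 0 then a i j0 * real (i + 1) / h j0 else 0)" for i
  have j0: "j0 \<le> i \<and> h j0 \<noteq> 0" if ex: "\<exists>j\<le>i. h j \<noteq> 0" for i
  proof -
    obtain j where "j \<le> i" "h j \<noteq> 0" using ex by blast
    moreover have "h j0 \<noteq> 0" unfolding j0_def by (rule LeastI) fact
    moreover have "j0 \<le> j" unfolding j0_def by (rule Least_le) fact
    ultimately show ?thesis by simp
  qed
  have F1: "a i j = 0" if "\<not> j \<le> i" for i j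
    using U[of i j] that by simp
  have F3: "a i j = 0" if "h j = 0" for i j
    using U[of i j] that by (simp split: if_splits)
  have mf: "mat_form a h g" unfolding mat_form_def
  proof (intro allI)
    fix i j
    show "a i j = (if j \<le> i then g i * h j / real (i + 1) else 0)"
    proof (cases "j \<le> i")
      case True
      show ?thesis
      proof (cases "h j = 0")
        case True then show ?thesis using F3 by simp
      next
        case False
        then have ex: "\<exists>j\<le>i. h j \<noteq> 0" using \<open>j \<le> i\<close> by blast
        note jj = j0[OF ex]
        have "a i j * h j0 = a i j0 * h j" by (rule d_pair[OF H]) (use \<open>j \<le> i\<close> jj in auto)
        then have e1: "a i j = a i j0 * h j / h j0" using jj by (simp add: eq_divide_eq)
        have "g i * h j / real (i + 1) = a i j0 * h j / h j0"
          using ex by (simp add: g_def)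
        then show ?thesis using True e1 by simp
      qed
    qed (simp add: F1)
  qed
  have bd: "\<bar>g i\<bar> \<le> C" for i
  proof (cases "\<exists>j\<le>i. h j \<noteq> 0")
    case True
    note jj = j0[OF True]
    have "\<bar>a i j0\<bar> \<le> C * (1 / real (i + 1)) * \<bar>h j0\<bar>" using U[of i j0] jj by simp
    then have "\<bar>a i j0\<bar> * real (i + 1) \<le> C * \<bar>h j0\<bar>"
      by (simp add: divide_simps mult.commute)
    then have "\<bar>a i j0\<bar> * real (i + 1) / \<bar>h j0\<bar> \<le> C" using jj by (simp add: divide_le_eq)
    then show ?thesis using True by (simp add: g_def abs_mult)
  qed (use C in \<open>auto simp: g_def\<close>)
  show ?thesis
  proof (intro exI[of _ g] conjI allI impI)
    show "mat_form a h g" by fact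
    show "\<exists>C>0. \<forall>i. \<bar>g i\<bar> \<le> C" using bd C by blast
    fix i assume z: "\<forall>j\<le>i. h j = 0"
    then have "\<not> (\<exists>j\<le>i. h j \<noteq> 0)" by blast
    then show "g i = 0" by (simp only: g_def if_False)
  qed
qed

lemma b_imp_d:
  assumes "mat_form a h g" "\<And>i. \<bar>g i\<bar> \<le> K"
  shows "cond_d a h"
  unfolding cond_d_def
proof (intro exI[of _ "\<bar>K\<bar> + 1"] conjI allI impI)
  show "\<bar>K\<bar> + 1 > 0" by simp
  fix n m :: nat and \<rho> :: "nat \<Rightarrow> real"
  define S where "S = (\<Sum>j<min (n + 1) m. h j * \<rho> j)"
  have "(\<Sum>j<m. \<rho> j * a n j) = g n * (1 / real (n + 1)) * S"
    by (simp add: rowsum[OF assms(1)] S_def)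
  also have "\<dots> \<le> \<bar>g n\<bar> * (1 / real (n + 1)) * \<bar>S\<bar>"
  proof -
    have "g n * (1 / real (n + 1)) * S \<le> \<bar>g n * (1 / real (n + 1)) * S\<bar>" by (rule abs_ge_self)
    then show ?thesis by (simp add: abs_mult)
  qed
  also have "\<dots> \<le> (\<bar>K\<bar> + 1) * (1 / real (n + 1)) * \<bar>S\<bar>"
    using assms(2)[of n] by (intro mult_right_mono) auto
  finally show "(\<Sum>j<m. \<rho> j * a n j) \<le> (\<bar>K\<bar> + 1) * (1 / real (n + 1)) * \<bar>\<Sum>j<min (n + 1) m. h j * \<rho> j\<bar>"
    by (simp add: S_def)
qed

lemma b_imp_c_fin:
  assumes s: "s > 1" and t: "t = s/(s-1)" and mf: "mat_form a h g"
    and sm: "summable (\<lambda>i. \<bar>g i\<bar> powr s)"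
  shows "cond_c a h t"
  unfolding cond_c_def
proof (intro exI[of _ "(\<Sum>i. \<bar>g i\<bar> powr s) powr (1/s) + 1"] conjI allI impI)
  define G where "G = (\<Sum>i. \<bar>g i\<bar> powr s) powr (1/s)"
  show "(\<Sum>i. \<bar>g i\<bar> powr s) powr (1/s) + 1 > 0" by (simp add: add_nonneg_pos)
  fix n m :: nat and R :: "nat \<Rightarrow> nat \<Rightarrow> real"
  define u where "u i = 1 / real (i + 1) * (\<Sum>j<min (i + 1) m. h j * R i j)" for i
  have t1: "t > 1" "1/s + 1/t = 1" using s by (simp_all add: t divide_simps)
  have "(\<Sum>i<n. \<Sum>j<m. R i j * a i j) = (\<Sum>i<n. g i * u i)"
    by (rule sum.cong[OF refl]) (simp add: rowsum[OF mf] u_def)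
  also have "\<dots> \<le> (\<Sum>i<n. \<bar>g i\<bar> powr s) powr (1/s) * (\<Sum>i<n. \<bar>u i\<bar> powr t) powr (1/t)"
    by (rule holder_fin) (use s t1 in auto)
  also have "\<dots> \<le> (G + 1) * (\<Sum>i<n. \<bar>u i\<bar> powr t) powr (1/t)"
  proof (rule mult_right_mono)
    have "(\<Sum>i<n. \<bar>g i\<bar> powr s) \<le> (\<Sum>i. \<bar>g i\<bar> powr s)"
      by (rule sum_le_suminf[OF sm]) auto
    then have "(\<Sum>i<n. \<bar>g i\<bar> powr s) powr (1/s) \<le> G"
      unfolding G_def by (rule powr_mono2[rotated 2]) (use s in \<open>auto simp: sum_nonneg\<close>)
    then show "(\<Sum>i<n. \<bar>g i\<bar> powr s) powr (1/s) \<le> G + 1" by simp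
  qed simp
  also have "(\<Sum>i<n. \<bar>u i\<bar> powr t) = (\<Sum>i<n. (1 / real (i + 1) powr t) * \<bar>\<Sum>j<min (i + 1) m. h j * R i j\<bar> powr t)"
    by (rule sum.cong[OF refl]) (simp add: u_def abs_mult powr_mult powr_divide)
  finally show "(\<Sum>i<n. \<Sum>j<m. R i j * a i j) \<le> ((\<Sum>i. \<bar>g i\<bar> powr s) powr (1/s) + 1) * (\<Sum>i<n. (1 / real (i + 1) powr t) *
                        \<bar>\<Sum>j<min (i + 1) m. h j * R i j\<bar> powr t) powr (1 / t)"
    by (simp add: G_def)
qed

lemma c_imp_lps:
  assumes s: "s > 1" and t: "t = s/(s-1)" and c: "cond_c a h t" and mf: "mat_form a h g"
    and z: "\<forall>i. (\<forall>j\<le>i. h j = 0) \<longrightarrow> g i = 0"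
  shows "summable (\<lambda>i. \<bar>g i\<bar> powr s)"
proof (cases "\<forall>j. h j = 0")
  case True
  then have "\<forall>i. g i = 0" using z by auto
  then show ?thesis by simp
next
  case False
  then obtain jj where jj: "h jj \<noteq> 0" by auto
  define j0 where "j0 = (LEAST j. h j \<noteq> 0)"
  have hj0: "h j0 \<noteq> 0" unfolding j0_def by (rule LeastI) (rule jj)
  have lt: "h j = 0" if jl: "j < j0" for j
    using not_less_Least[of j "\<lambda>j. h j \<noteq> 0"] jl unfolding j0_def by blast
  have tp: "t > 0" using s by (simp add: t)
  obtain C where C: "C > 0" and H: "\<And>n m R. (\<forall>i j. \<bar>R i j\<bar> \<le> 1) \<Longrightarrow>
             (\<Sum>i<n. \<Sum>j<m. R i j * a i j)
               \<le> C * (\<Sum>i<n. (1 / real (i + 1) powr t) *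
                        \<bar>\<Sum>j<min (i + 1) m. h j * R i j\<bar> powr t) powr (1 / t)"
    using c unfolding cond_c_def by blast
  define c where "c i = (if j0 \<le> i then h j0 / real (i + 1) else 0)" for i
  have Gc: "\<forall>i. c i = 0 \<longrightarrow> g i = 0"
  proof (intro allI impI)
    fix i assume "c i = 0"
    then have "\<not> j0 \<le> i" using hj0 by (auto simp: c_def)
    then have "\<forall>j\<le>i. h j = 0" using lt by auto
    then show "g i = 0" using z by blast
  qed
  have aij0: "a i j0 = g i * c i" for i
    using mf unfolding mat_form_def c_def by auto
  have bound: "(\<Sum>i<n. \<bar>g i\<bar> powr s) \<le> C powr s" for n
  proof (rule conv_holder[OF s t C Gc], intro allI impI)
    fix \<epsilon> :: "nat \<Rightarrow> real" assume eb: "\<forall>i. \<bar>\<epsilon> i\<bar> \<le> 1"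
    define R where "R i j = (if j = j0 then \<epsilon> i else 0)" for i j
    have Rb: "\<forall>i j. \<bar>R i j\<bar> \<le> 1" using eb by (simp add: R_def)
    have l: "(\<Sum>j<Suc j0. R i j * a i j) = \<epsilon> i * (g i * c i)" for i
    proof -
      have "(\<Sum>j<Suc j0. R i j * a i j) = (\<Sum>j<Suc j0. if j = j0 then \<epsilon> i * a i j else 0)"
        by (rule sum.cong) (auto simp: R_def)
      also have "\<dots> = \<epsilon> i * a i j0" by (simp add: sum.delta)
      finally show ?thesis by (simp add: aij0)
    qed
    have r: "(1 / real (i + 1) powr t) * \<bar>\<Sum>j<min (i + 1) (Suc j0). h j * R i j\<bar> powr t = \<bar>c i * \<epsilon> i\<bar> powr t" for i
    proof -
      have "(\<Sum>j<min (i + 1) (Suc j0). h j * R i j) = (\<Sum>j<min (i + 1) (Suc j0). if j = j0 then h j0 * \<epsilon> i else 0)"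
        by (rule sum.cong) (auto simp: R_def)
      also have "\<dots> = (if j0 \<le> i then h j0 * \<epsilon> i else 0)" by (simp add: sum.delta)
      finally have e: "(\<Sum>j<min (i + 1) (Suc j0). h j * R i j) = (if j0 \<le> i then h j0 * \<epsilon> i else 0)" .
      show ?thesis
      proof (cases "j0 \<le> i")
        case True
        have "\<bar>c i * \<epsilon> i\<bar> = \<bar>h j0 * \<epsilon> i\<bar> / real (i + 1)" using True by (simp add: c_def abs_mult)
        then show ?thesis using True e by (simp add: powr_divide)
      next
        case False
        then show ?thesis using e by (simp add: c_def)
      qed
    qed
    have "(\<Sum>i<n. \<Sum>j<Suc j0. R i j * a i j)
               \<le> C * (\<Sum>i<n. (1 / real (i + 1) powr t) *
                        \<bar>\<Sum>j<min (i + 1) (Suc j0). h j * R i j\<bar> powr t) powr (1 / t)"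
      by (rule H[OF Rb])
    moreover have eqL: "(\<Sum>i<n. \<Sum>j<Suc j0. R i j * a i j) = (\<Sum>i<n. \<epsilon> i * (g i * c i))"
      by (rule sum.cong[OF refl]) (rule l)
    moreover have eqR: "(\<Sum>i<n. (1 / real (i + 1) powr t) *
                        \<bar>\<Sum>j<min (i + 1) (Suc j0). h j * R i j\<bar> powr t) = (\<Sum>i<n. \<bar>c i * \<epsilon> i\<bar> powr t)"
      by (rule sum.cong[OF refl]) (rule r)
    ultimately show "(\<Sum>i<n. \<epsilon> i * (g i * c i)) \<le> C * (\<Sum>i<n. \<bar>c i * \<epsilon> i\<bar> powr t) powr (1/t)"
      by (simp only:)
  qed
  show ?thesis
    by (rule summableI_nonneg_bounded[where x="C powr s"]) (use bound in auto)
qed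

theorem proposition5p3:
  fixes p q r :: real
    and T :: "(nat \<Rightarrow> real) \<Rightarrow> (nat \<Rightarrow> real)"
    and h :: "nat \<Rightarrow> real"
    and a :: "nat \<Rightarrow> nat \<Rightarrow> real"
    and s :: ereal and s' :: real
  assumes "1 \<le> p" and "1 < q" and "1 < r"
    and "bounded_lin_op p q T"
    and "\<exists>x. in_lp (ereal p) x \<and> T x \<noteq> (\<lambda>_. 0)"
    and a_def: "\<And>i j. a i j = T (unit_vec j) i"
    and "in_lp (s_exp p r) h"
    and s_def: "s = s_exp r q" and s'_def: "s' = conj_exp s"
  shows "((\<exists>g. in_lp s g \<and>
             (\<forall>x. in_lp (ereal p) x \<longrightarrow> T x = (\<lambda>n. g n * cesaro (\<lambda>k. h k * x k) n)))
          \<longleftrightarrow>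
          (\<exists>g. in_lp s g \<and>
             (\<forall>i j. a i j = (if j \<le> i then g i * h j / real (i + 1) else 0))))
       \<and>
         ((\<exists>g. in_lp s g \<and>
             (\<forall>i j. a i j = (if j \<le> i then g i * h j / real (i + 1) else 0)))
          \<longleftrightarrow>
          (\<exists>C>0. \<forall>n m (R :: nat \<Rightarrow> nat \<Rightarrow> real). (\<forall>i j. \<bar>R i j\<bar> \<le> 1) \<longrightarrow>
             (\<Sum>i<n. \<Sum>j<m. R i j * a i j)
               \<le> C * (\<Sum>i<n. (1 / real (i + 1) powr s') *
                        \<bar>\<Sum>j<min (i + 1) m. h j * R i j\<bar> powr s') powr (1 / s')))
       \<and>
         (r \<le> q \<longrightarrow>
          ((\<exists>C>0. \<forall>n m (R :: nat \<Rightarrow> nat \<Rightarrow> real). (\<forall>i j. \<bar>R i j\<bar> \<le> 1) \<longrightarrow>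
             (\<Sum>i<n. \<Sum>j<m. R i j * a i j)
               \<le> C * (\<Sum>i<n. (1 / real (i + 1) powr s') *
                        \<bar>\<Sum>j<min (i + 1) m. h j * R i j\<bar> powr s') powr (1 / s'))
           \<longleftrightarrow>
           (\<exists>C>0. \<forall>n m (\<rho> :: nat \<Rightarrow> real). (\<forall>j. \<bar>\<rho> j\<bar> \<le> 1) \<longrightarrow>
             (\<Sum>j<m. \<rho> j * a n j)
               \<le> C * (1 / real (n + 1)) * \<bar>\<Sum>j<min (n + 1) m. h j * \<rho> j\<bar>)))"
proof -
  have AB: "(\<forall>x. in_lp (ereal p) x \<longrightarrow> T x = (\<lambda>n. g n * cesaro (\<lambda>k. h k * x k) n)) \<longleftrightarrow> mat_form a h g" for g
  proof
    assume A: "\<forall>x. in_lp (ereal p) x \<longrightarrow> T x = (\<lambda>n. g n * cesaro (\<lambda>k. h k * x k) n)"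
    show "mat_form a h g" by (rule mat_from_T[where p=p and T=T, OF A assms(1) a_def])
  next
    assume "mat_form a h g"
    then show "\<forall>x. in_lp (ereal p) x \<longrightarrow> T x = (\<lambda>n. g n * cesaro (\<lambda>k. h k * x k) n)"
      by (rule T_from_mat[OF assms(4) assms(1) assms(2) a_def])
  qed
  have BC: "(\<exists>g. in_lp s g \<and> mat_form a h g) \<longleftrightarrow> cond_c a h s'"
  proof (cases "q < r")
    case True
    define sr where "sr = r * q / (r - q)"
    have "r < r * q" using mult_strict_left_mono[of 1 q r] assms(2,3) by simp
    then have "r - q < r * q" using assms(2) by linarith
    then have sr1: "sr > 1" using True by (simp add: sr_def divide_simps)
    have ss: "s = ereal sr" using True by (simp add: s_def s_exp_def sr_def)
    have s's: "s' = sr / (sr - 1)" by (simp add: s'_def ss conj_exp_def)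
    have s'p: "s' > 0" using sr1 by (simp add: s's)
    have lp: "in_lp s g \<longleftrightarrow> summable (\<lambda>i. \<bar>g i\<bar> powr sr)" for g
      by (simp add: ss in_lp_def)
    show ?thesis
    proof
      assume "\<exists>g. in_lp s g \<and> mat_form a h g"
      then obtain g where "in_lp s g" "mat_form a h g" by blast
      then show "cond_c a h s'" using b_imp_c_fin[OF sr1 s's] lp by blast
    next
      assume c: "cond_c a h s'"
      obtain g where mf: "mat_form a h g" and z: "\<forall>i. (\<forall>j\<le>i. h j = 0) \<longrightarrow> g i = 0"
        using d_struct[OF c_imp_d[OF s'p c]] by blast
      have "summable (\<lambda>i. \<bar>g i\<bar> powr sr)" by (rule c_imp_lps[OF sr1 s's c mf z])
      then show "\<exists>g. in_lp s g \<and> mat_form a h g" using mf lp by blast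
    qed
  next
    case False
    have ss: "s = \<infinity>" using False by (simp add: s_def s_exp_def)
    have s'1: "s' = 1" by (simp add: s'_def ss conj_exp_def)
    have lp: "in_lp s g \<longleftrightarrow> bdd_above (range (\<lambda>n. \<bar>g n\<bar>))" for g
      by (simp add: ss in_lp_def)
    show ?thesis
    proof
      assume "\<exists>g. in_lp s g \<and> mat_form a h g"
      then obtain g where g: "in_lp s g" "mat_form a h g" by blast
      then obtain K where "\<And>i. \<bar>g i\<bar> \<le> K" using lp by (auto simp: bdd_above_def)
      then show "cond_c a h s'" using d_imp_c1[OF b_imp_d[OF g(2)]] s'1 by blast
    next
      assume c: "cond_c a h s'"
      obtain g C where mf: "mat_form a h g" and bd: "\<forall>i. \<bar>g i\<bar> \<le> C"
        using d_struct[OF c_imp_d[of 1, OF _ c[unfolded s'1]]] by auto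
      have "bdd_above (range (\<lambda>n. \<bar>g n\<bar>))" using bd by (auto intro: bdd_aboveI)
      then show "\<exists>g. in_lp s g \<and> mat_form a h g" using mf lp by blast
    qed
  qed
  have CD: "r \<le> q \<longrightarrow> (cond_c a h s' \<longleftrightarrow> cond_d a h)"
  proof
    assume "r \<le> q"
    then have "s = \<infinity>" by (simp add: s_def s_exp_def)
    then have s'1: "s' = 1" by (simp add: s'_def conj_exp_def)
    show "cond_c a h s' \<longleftrightarrow> cond_d a h"
      using c_imp_d[of 1] d_imp_c1 s'1 by auto
  qed
  show ?thesis
    using AB BC CD unfolding mat_form_def cond_c_def cond_d_def by blast
qed

end
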